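(* Let $m>0$, $B_0\in\mathbb R$, and let $B_{[N]}\in\mathbb R^{N\times N}$ be the Jacobi matrix $$(B_{[N]}f)_n=-\xi_{n,n+1}f_{n+1}-\xi_{n-1,n}f_{n-1}+\Big(\eta_n+\tfrac{B_0^2}{2m}+\xi_{n,n+1}+\xi_{n-1,n}\Big)f_n,\quad n\in[N],$$ with $\eta_n>0$, $\xi_{n,n+1}>0$ and the convention $\xi_{0,1}=\xi_{N,N+1}=0$. Let $$A=\begin{pmatrix} i m^{-1}B_0 I_N & -m^{-1}I_N\\ B_{[N]} & -i m^{-1}B_0 I_N\end{pmatrix}\in\mathbb C^{2N\times 2N}.$$ Then to any eigenpair $(\lambda_j,v_j)$ of $B_{[N]}$ there correspond two eigenvalues of $A$, $$\mu_j^{\pm}=\pm\frac{i\sqrt{B_0^2+\lambda_j m}}{m},$$ with eigenvectors $$V_j^{\pm}=\frac{(v_j,u_j)^T}{|(v_j,u_j)^T|},\qquad u_j=i\Big(B_0\mp\sqrt{B_0^2+\lambda_j m}\Big)v_j.$$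
   Context: $A$ is the friction-free part (in a complex basis diagonalizing the magnetic coupling) of the drift matrix of a planar chain of $N$ charged harmonic oscillators of mass $m$ in a constant magnetic field $B_0$, with pinning parameters $\eta_n$ and nearest-neighbour couplings $\xi_{n,n+1}$. $[N]=\{1,\dots,N\}$. *)

theory Defs
  imports "Jordan_Normal_Form.Char_Poly"
begin

text \<open>Nearest-neighbour couplings with the boundary convention xi_{0,1} = xi_{N,N+1} = 0.
  xi k stands for xi_{k,k+1}.\<close>
definition xi_conv :: "nat \<Rightarrow> (nat \<Rightarrow> real) \<Rightarrow> nat \<Rightarrow> real" where
  "xi_conv N xi k = (if 1 \<le> k \<and> k < N then xi k else 0)"

text \<open>The Jacobi matrix B_[N] (0-based row/column i corresponds to site n = i+1).\<close>
definition jacobi_B :: "nat \<Rightarrow> real \<Rightarrow> real \<Rightarrow> (nat \<Rightarrow> real) \<Rightarrow> (nat \<Rightarrow> real) \<Rightarrow> real mat" where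
  "jacobi_B N m B0 eta xi = mat N N (\<lambda>(i,j).
     if i = j then eta (i+1) + B0\<^sup>2 / (2*m) + xi_conv N xi (i+1) + xi_conv N xi i
     else if j = i + 1 then - xi_conv N xi (i+1)
     else if i = j + 1 then - xi_conv N xi i
     else 0)"

definition drift_A :: "nat \<Rightarrow> real \<Rightarrow> real \<Rightarrow> (nat \<Rightarrow> real) \<Rightarrow> (nat \<Rightarrow> real) \<Rightarrow> complex mat" where
  "drift_A N m B0 eta xi = four_block_mat
     ((\<i> * complex_of_real (B0 / m)) \<cdot>\<^sub>m 1\<^sub>m N)
     ((- complex_of_real (1 / m)) \<cdot>\<^sub>m 1\<^sub>m N)
     (map_mat complex_of_real (jacobi_B N m B0 eta xi))
     ((- \<i> * complex_of_real (B0 / m)) \<cdot>\<^sub>m 1\<^sub>m N)"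

definition cvec_norm :: "complex vec \<Rightarrow> real" where
  "cvec_norm v = sqrt (\<Sum>i<dim_vec v. (cmod (v $ i))\<^sup>2)"

end

theory Submission
  imports Defs
begin

lemma smult_one_mult_vec:
  fixes w :: "'a::comm_ring_1 vec"
  assumes "w \<in> carrier_vec n"
  shows "(k \<cdot>\<^sub>m 1\<^sub>m n) *\<^sub>v w = k \<cdot>\<^sub>v w"
  using assms by auto

lemma smult_append_vec: "k \<cdot>\<^sub>v (a @\<^sub>v b) = (k \<cdot>\<^sub>v a) @\<^sub>v (k \<cdot>\<^sub>v b)"
  unfolding append_vec_def Let_def by (rule eq_vecI) auto

lemma xi_conv_nonneg:
  assumes "\<And>n. 1 \<le> n \<Longrightarrow> n < N \<Longrightarrow> xi n > 0"
  shows "xi_conv N xi k \<ge> 0"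
  using assms[of k] unfolding xi_conv_def by auto

lemma jacobi_lam_pos:
  assumes m_pos: "m > 0"
    and eta_pos: "\<And>n. 1 \<le> n \<Longrightarrow> n \<le> N \<Longrightarrow> eta n > 0"
    and xi_pos: "\<And>n. 1 \<le> n \<Longrightarrow> n < N \<Longrightarrow> xi n > 0"
    and eig: "eigenvector (jacobi_B N m B0 eta xi) v lam"
  shows "lam > 0"
proof -
  let ?B = "jacobi_B N m B0 eta xi"
  have Bc: "?B \<in> carrier_mat N N" unfolding jacobi_B_def by simp
  from eig Bc have vc: "v \<in> carrier_vec N" and vnz: "v \<noteq> 0\<^sub>v N" and ev: "?B *\<^sub>v v = lam \<cdot>\<^sub>v v"
    unfolding eigenvector_def by auto
  have "\<exists>i<N. v $ i \<noteq> 0"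
  proof (rule ccontr)
    assume "\<not> ?thesis"
    hence "v = 0\<^sub>v N" using vc by (intro eq_vecI) auto
    thus False using vnz by simp
  qed
  then obtain i0 where i0: "i0 < N" "v $ i0 \<noteq> 0" by blast
  define M where "M = Max ((\<lambda>j. \<bar>v $ j\<bar>) ` {..<N})"
  have "M \<in> (\<lambda>j. \<bar>v $ j\<bar>) ` {..<N}" unfolding M_def using i0 by (intro Max_in) auto
  then obtain i where i: "i < N" "\<bar>v $ i\<bar> = M" by auto
  have Mge: "\<And>j. j < N \<Longrightarrow> \<bar>v $ j\<bar> \<le> M" unfolding M_def by (intro Max_ge) auto
  have "M \<ge> \<bar>v $ i0\<bar>" using Mge i0 by auto
  hence "v $ i \<noteq> 0" using i i0 by auto
  hence vi: "v $ i * v $ i > 0" by (metis linorder_neqE_linordered_idom mult_neg_neg mult_pos_pos)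
  define c where "c = eta (i+1) + B0\<^sup>2 / (2*m)"
  have cpos: "c > 0" unfolding c_def using eta_pos[of "i+1"] i m_pos by (auto intro: add_pos_nonneg)
  have xnn: "\<And>k. xi_conv N xi k \<ge> 0" using xi_conv_nonneg xi_pos by blast
  define a where "a = xi_conv N xi (i+1)"
  define b where "b = xi_conv N xi i"
  have Bij: "\<And>j. j < N \<Longrightarrow> ?B $$ (i,j) = (if j = i then c + a + b else 0)
       + (if j = i + 1 then - a else 0) + (if i = j + 1 then - b else 0)"
    using i unfolding jacobi_B_def a_def b_def c_def by auto
  have "lam * (v $ i * v $ i) = (?B *\<^sub>v v) $ i * v $ i" using ev i vc by simp
  also have "\<dots> = (\<Sum>j<N. ?B $$ (i,j) * v $ j * v $ i)"
    using i vc Bc by (simp add: scalar_prod_def row_def sum_distrib_right atLeast0LessThan)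
  also have "\<dots> \<ge> (\<Sum>j<N. ?B $$ (i,j) * (v $ i * v $ i))"
  proof (rule sum_mono)
    fix j assume j: "j \<in> {..<N}"
    show "?B $$ (i,j) * (v $ i * v $ i) \<le> ?B $$ (i,j) * v $ j * v $ i"
    proof (cases "j = i")
      case True thus ?thesis by simp
    next
      case False
      have le: "?B $$ (i,j) \<le> 0" using Bij[of j] j False xnn[of i] xnn[of "i+1"] unfolding a_def b_def by auto
      have "v $ j * v $ i \<le> v $ i * v $ i"
      proof -
        have "v $ j * v $ i \<le> \<bar>v $ j\<bar> * \<bar>v $ i\<bar>" by (metis abs_ge_self abs_mult)
        also have "\<dots> \<le> \<bar>v $ i\<bar> * \<bar>v $ i\<bar>" using Mge[of j] j i by (auto intro: mult_right_mono)
        finally show ?thesis by (metis abs_mult_self_eq)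
      qed
      thus ?thesis using le by (metis mult.assoc mult_left_mono_neg)
    qed
  qed
  finally have ineq: "(\<Sum>j<N. ?B $$ (i,j)) * (v $ i * v $ i) \<le> lam * (v $ i * v $ i)"
    by (simp add: sum_distrib_right)
  have "(\<Sum>j<N. ?B $$ (i,j)) = (\<Sum>j<N. (if j = i then c + a + b else 0)
       + (if j = i + 1 then - a else 0) + (if i = j + 1 then - b else 0))"
    using Bij by (intro sum.cong) auto
  also have "\<dots> = (c + a + b) + (if i + 1 < N then - a else 0) + (if i \<ge> 1 then - b else 0)"
  proof -
    have s3: "(\<Sum>j<N. (if i = j + 1 then - b else 0)) = (if i \<ge> 1 then - b else 0)"
    proof (cases "i \<ge> 1")
      case True
      hence "(\<Sum>j<N. (if i = j + 1 then - b else 0)) = (\<Sum>j<N. (if j = i - 1 then - b else 0))"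
        by (intro sum.cong) auto
      thus ?thesis using True i by simp
    next
      case False thus ?thesis by simp
    qed
    show ?thesis using i s3 by (simp add: sum.distrib)
  qed
  also have "\<dots> = c"
    unfolding a_def b_def xi_conv_def using i by auto
  finally have "c * (v $ i * v $ i) \<le> lam * (v $ i * v $ i)" using ineq by simp
  hence "c \<le> lam" using vi by (rule mult_right_le_imp_le)
  thus ?thesis using cpos by simp
qed

lemma nonzero_vec:
  assumes "v \<in> carrier_vec N" "v \<noteq> 0\<^sub>v N"
  shows "\<exists>i<N. v $ i \<noteq> 0"
proof (rule ccontr)
  assume "\<not> ?thesis"
  hence "v = 0\<^sub>v N" using assms by (intro eq_vecI) auto
  thus False using assms by simp
qed

theorem proposition2p2:
  fixes N :: nat and m B0 :: real and eta xi :: "nat \<Rightarrow> real"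
    and lam :: real and v :: "real vec" and s :: real
  assumes m_pos: "m > 0"
    and eta_pos: "\<And>n. 1 \<le> n \<Longrightarrow> n \<le> N \<Longrightarrow> eta n > 0"
    and xi_pos: "\<And>n. 1 \<le> n \<Longrightarrow> n < N \<Longrightarrow> xi n > 0"
    and eig: "eigenvector (jacobi_B N m B0 eta xi) v lam"
    and sign: "s = 1 \<or> s = -1"
  shows "let r = sqrt (B0\<^sup>2 + lam * m);
             mu = complex_of_real s * \<i> * complex_of_real r / complex_of_real m;
             vc = map_vec complex_of_real v;
             u = (\<i> * complex_of_real (B0 - s * r)) \<cdot>\<^sub>v vc;
             W = vc @\<^sub>v u;
             V = (1 / complex_of_real (cvec_norm W)) \<cdot>\<^sub>v W
         in eigenvector (drift_A N m B0 eta xi) V mu"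
proof -
  define r where "r = sqrt (B0\<^sup>2 + lam * m)"
  define mu where "mu = complex_of_real s * \<i> * complex_of_real r / complex_of_real m"
  define vc where "vc = map_vec complex_of_real v"
  define u where "u = (\<i> * complex_of_real (B0 - s * r)) \<cdot>\<^sub>v vc"
  define W where "W = vc @\<^sub>v u"
  define V where "V = (1 / complex_of_real (cvec_norm W)) \<cdot>\<^sub>v W"
  let ?B = "jacobi_B N m B0 eta xi"
  let ?A = "drift_A N m B0 eta xi"
  have lampos: "lam > 0" using jacobi_lam_pos[OF m_pos eta_pos xi_pos eig] by auto
  have nn: "0 \<le> B0\<^sup>2 + lam * m" using lampos m_pos by (intro add_nonneg_nonneg) auto
  have r2: "r * r = B0\<^sup>2 + lam * m" unfolding r_def using nn by simp
  have s2: "s * s = 1" using sign by auto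
  have Bc: "?B \<in> carrier_mat N N" unfolding jacobi_B_def by simp
  from eig Bc have vcar: "v \<in> carrier_vec N" and vnz: "v \<noteq> 0\<^sub>v N" and ev: "?B *\<^sub>v v = lam \<cdot>\<^sub>v v"
    unfolding eigenvector_def by auto
  obtain i0 where i0: "i0 < N" "v $ i0 \<noteq> 0" using nonzero_vec[OF vcar vnz] by blast
  have vcc: "vc \<in> carrier_vec N" unfolding vc_def using vcar by simp
  have uc: "u \<in> carrier_vec N" unfolding u_def using vcc by simp
  have Wc: "W \<in> carrier_vec (N+N)" unfolding W_def using vcc uc by simp
  have Ac: "?A \<in> carrier_mat (N+N) (N+N)" unfolding drift_A_def using Bc by auto
  have Bvc: "map_mat complex_of_real ?B *\<^sub>v vc = complex_of_real lam \<cdot>\<^sub>v vc"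
  proof -
    have "map_mat complex_of_real ?B *\<^sub>v vc = map_vec complex_of_real (?B *\<^sub>v v)"
      unfolding vc_def by (rule of_real_hom.mult_mat_vec_hom[OF Bc vcar, symmetric])
    also have "\<dots> = complex_of_real lam \<cdot>\<^sub>v vc" unfolding ev vc_def
      by (rule eq_vecI) auto
    finally show ?thesis .
  qed
  have AW: "?A *\<^sub>v W = mu \<cdot>\<^sub>v W"
  proof -
    have "?A *\<^sub>v W = (((\<i> * complex_of_real (B0 / m)) \<cdot>\<^sub>m 1\<^sub>m N) *\<^sub>v vc + ((- complex_of_real (1 / m)) \<cdot>\<^sub>m 1\<^sub>m N) *\<^sub>v u)
       @\<^sub>v (map_mat complex_of_real ?B *\<^sub>v vc + ((- \<i> * complex_of_real (B0 / m)) \<cdot>\<^sub>m 1\<^sub>m N) *\<^sub>v u)"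
      unfolding drift_A_def W_def using Bc vcc uc
      by (intro four_block_mat_mult_vec) auto
    also have "\<dots> = ((\<i> * complex_of_real (B0 / m)) \<cdot>\<^sub>v vc + (- complex_of_real (1 / m)) \<cdot>\<^sub>v u)
       @\<^sub>v (complex_of_real lam \<cdot>\<^sub>v vc + (- \<i> * complex_of_real (B0 / m)) \<cdot>\<^sub>v u)"
      using vcc uc Bvc by (simp add: smult_one_mult_vec)
    also have "\<dots> = (mu \<cdot>\<^sub>v vc) @\<^sub>v (mu \<cdot>\<^sub>v u)"
    proof -
      have e1: "(\<i> * complex_of_real (B0 / m)) \<cdot>\<^sub>v vc + (- complex_of_real (1 / m)) \<cdot>\<^sub>v u = mu \<cdot>\<^sub>v vc"
      proof (rule eq_vecI)
        fix j assume "j < dim_vec (mu \<cdot>\<^sub>v vc)"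
        hence j: "j < N" using vcc by simp
        show "((\<i> * complex_of_real (B0 / m)) \<cdot>\<^sub>v vc + (- complex_of_real (1 / m)) \<cdot>\<^sub>v u) $ j = (mu \<cdot>\<^sub>v vc) $ j"
          using j vcc uc m_pos unfolding u_def mu_def
          by (simp add: field_simps)
      qed (use vcc uc in simp)
      have e2: "complex_of_real lam \<cdot>\<^sub>v vc + (- \<i> * complex_of_real (B0 / m)) \<cdot>\<^sub>v u = mu \<cdot>\<^sub>v u"
      proof (rule eq_vecI)
        fix j assume "j < dim_vec (mu \<cdot>\<^sub>v u)"
        hence j: "j < N" using uc by simp
        have key: "lam * m + B0 * (B0 - s * r) = - s * r * (B0 - s * r)"
          using r2 s2 by (simp add: algebra_simps power2_eq_square)
        have keyc: "complex_of_real lam * complex_of_real m + complex_of_real B0 * (complex_of_real B0 - complex_of_real s * complex_of_real r)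
           = - complex_of_real s * complex_of_real r * (complex_of_real B0 - complex_of_real s * complex_of_real r)"
          using arg_cong[OF key, of complex_of_real] by simp
        show "(complex_of_real lam \<cdot>\<^sub>v vc + (- \<i> * complex_of_real (B0 / m)) \<cdot>\<^sub>v u) $ j = (mu \<cdot>\<^sub>v u) $ j"
          using j vcc uc m_pos unfolding u_def mu_def
          apply (simp add: field_simps)
          using keyc apply (simp add: algebra_simps)
          apply (drule arg_cong[where f="\<lambda>z. z * vc $ j"])
          by (simp add: algebra_simps)
      qed (use vcc uc in simp)
      show ?thesis using e1 e2 by simp
    qed
    also have "\<dots> = mu \<cdot>\<^sub>v W" unfolding W_def by (simp add: smult_append_vec)
    finally show ?thesis .
  qed
  have npos: "cvec_norm W > 0"
  proof -
    have "W $ i0 = complex_of_real (v $ i0)" unfolding W_def vc_def using i0 vcar by simp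
    hence "(cmod (W $ i0))\<^sup>2 > 0" using i0 by simp
    moreover have "i0 \<in> {..<dim_vec W}" using Wc i0 by simp
    ultimately have "(\<Sum>i<dim_vec W. (cmod (W $ i))\<^sup>2) > 0"
      by (intro sum_pos2[where i=i0]) auto
    thus ?thesis unfolding cvec_norm_def by simp
  qed
  have Vc: "V \<in> carrier_vec (N+N)" unfolding V_def using Wc by simp
  have Vnz: "V \<noteq> 0\<^sub>v (N+N)"
  proof
    assume "V = 0\<^sub>v (N+N)"
    hence "V $ i0 = 0" using i0 by simp
    moreover have "V $ i0 = (1 / complex_of_real (cvec_norm W)) * complex_of_real (v $ i0)"
      unfolding V_def W_def vc_def using i0 vcar uc vcc by simp
    ultimately show False using npos i0 by simp
  qed
  have "?A *\<^sub>v V = mu \<cdot>\<^sub>v V"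
    unfolding V_def using mult_mat_vec[OF Ac Wc] AW
    by (simp add: smult_smult_assoc mult.commute)
  hence "eigenvector ?A V mu" unfolding eigenvector_def using Vc Vnz Ac by simp
  thus ?thesis unfolding r_def mu_def vc_def u_def W_def V_def Let_def by simp
qed

end
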